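(* Let $\mathbf{K}$ be a linear canonical transformation of $\mathbb{C}^{2n}$. The following are equivalent: (i) $-1\notin\operatorname{Spec}\mathbf{K}$ and $\operatorname{Re}\sigma\big(\overline{\mathbf{z}},\,i(1+\mathbf{K})^{-1}(1-\mathbf{K})\mathbf{z}\big)<0$ for all $\mathbf{z}\in\mathbb{C}^{2n}\setminus\{0\}$; (ii) $-1\notin\operatorname{Spec}\mathbf{K}$ and $\operatorname{Re}\sigma\big(\mathbf{z},\,i(1+\mathbf{K})^{-1}(1-\mathbf{K})\mathbf{z}\big)<0$ for all $\mathbf{z}\in\mathbb{R}^{2n}\setminus\{0\}$; (iii) $\mathbf{K}$ is strictly positive.
   Context: Points of $\mathbb{C}^{2n}$ are written $\mathbf{z}=(x,\xi)$, and $\sigma((x_1,\xi_1),(x_2,\xi_2))=\xi_1\cdot x_2-\xi_2\cdot x_1$ (complex bilinear, no conjugation). A complex linear map $\mathbf{K}$ of $\mathbb{C}^{2n}$ is canonical if $\sigma(\mathbf{K}\mathbf{z},\mathbf{K}\mathbf{w})=\sigma(\mathbf{z},\mathbf{w})$ for all $\mathbf{z},\mathbf{w}$; it is strictly positive if it is canonical and $i\big(\sigma(\overline{\mathbf{K}\mathbf{z}},\mathbf{K}\mathbf{z})-\sigma(\overline{\mathbf{z}},\mathbf{z})\big)>0$ for all $\mathbf{z}\in\mathbb{C}^{2n}\setminus\{0\}$. *)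

theory Defs
  imports "HOL-Analysis.Analysis" "HOL-Library.Complex_Order"
begin

text \<open>Points of C^{2n} are vectors indexed by 'n + 'n: the component at Inl j is x_j,
the component at Inr j is xi_j. Linear maps of C^{2n} are (complex) matrices.\<close>

type_synonym 'n pt = "complex ^ ('n + 'n)"
type_synonym 'n lmap = "complex ^ ('n + 'n) ^ ('n + 'n)"

definition xpart :: "'n::finite pt \<Rightarrow> 'n \<Rightarrow> complex" where
  "xpart z j = z $ Inl j"

definition xipart :: "'n::finite pt \<Rightarrow> 'n \<Rightarrow> complex" where
  "xipart z j = z $ Inr j"

definition symp :: "'n::finite pt \<Rightarrow> 'n pt \<Rightarrow> complex" where
  "symp z w = (\<Sum>j\<in>UNIV. xipart z j * xpart w j) - (\<Sum>j\<in>UNIV. xipart w j * xpart z j)"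

definition cvec :: "'n::finite pt \<Rightarrow> 'n pt" where
  "cvec z = (\<chi> k. cnj (z $ k))"

definition canonical :: "'n::finite lmap \<Rightarrow> bool" where
  "canonical K \<longleftrightarrow> (\<forall>z w. symp (K *v z) (K *v w) = symp z w)"

definition strictly_positive :: "'n::finite lmap \<Rightarrow> bool" where
  "strictly_positive K \<longleftrightarrow> canonical K \<and>
     (\<forall>z. z \<noteq> 0 \<longrightarrow> \<i> * (symp (cvec (K *v z)) (K *v z) - symp (cvec z) z) > 0)"

definition spec :: "'n::finite lmap \<Rightarrow> complex set" where
  "spec K = {c. \<exists>v. v \<noteq> 0 \<and> K *v v = c *s v}"

definition rvec :: "real ^ ('n::finite + 'n) \<Rightarrow> 'n pt" where
  "rvec y = (\<chi> k. complex_of_real (y $ k))"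

end

theory Submission
  imports Defs
begin

lemma symp_add_left: "symp (a + b) w = symp a w + symp b w"
  by (simp add: symp_def xpart_def xipart_def sum.distrib algebra_simps)
lemma symp_add_right: "symp w (a + b) = symp w a + symp w b"
  by (simp add: symp_def xpart_def xipart_def sum.distrib algebra_simps)
lemma symp_diff_left: "symp (a - b) w = symp a w - symp b w"
  by (simp add: symp_def xpart_def xipart_def sum_subtractf algebra_simps)
lemma symp_diff_right: "symp w (a - b) = symp w a - symp w b"
  by (simp add: symp_def xpart_def xipart_def sum_subtractf algebra_simps)
lemma symp_scale_left: "symp (c *s a) w = c * symp a w"
  by (simp add: symp_def xpart_def xipart_def sum_distrib_left algebra_simps)
lemma symp_scale_right: "symp w (c *s a) = c * symp w a"
  by (simp add: symp_def xpart_def xipart_def sum_distrib_left algebra_simps)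
lemma symp_antisym: "symp a b = - symp b a"
  by (simp add: symp_def)
lemma symp_zero_left[simp]: "symp 0 w = 0"
  by (simp add: symp_def xpart_def xipart_def)
lemma symp_zero_right[simp]: "symp w 0 = 0"
  by (simp add: symp_def xpart_def xipart_def)

lemma cvec_add: "cvec (a + b) = cvec a + cvec b"
  by (simp add: cvec_def vec_eq_iff)
lemma cvec_diff: "cvec (a - b) = cvec a - cvec b"
  by (simp add: cvec_def vec_eq_iff)
lemma cvec_scale: "cvec (c *s a) = cnj c *s cvec a"
  by (simp add: cvec_def vec_eq_iff)
lemma cvec_rvec: "cvec (rvec x) = rvec x"
  by (simp add: cvec_def rvec_def vec_eq_iff)
lemma cnj_symp: "cnj (symp a b) = symp (cvec a) (cvec b)"
  by (simp add: symp_def xpart_def xipart_def cvec_def)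

lemma Re_symp_cvec_self: "Re (symp (cvec z) z) = 0"
proof -
  have "cnj (symp (cvec z) z) = symp z (cvec z)"
    by (simp add: cnj_symp cvec_def vec_eq_iff)
  also have "\<dots> = - symp (cvec z) z" by (rule symp_antisym)
  finally have "cnj (symp (cvec z) z) = - symp (cvec z) z" .
  then have "Re (cnj (symp (cvec z) z)) = Re (- symp (cvec z) z)" by simp
  then show ?thesis by simp
qed


lemmas symp_lin = symp_add_left symp_add_right symp_diff_left symp_diff_right
  symp_scale_left symp_scale_right

lemma core_sym:
  fixes K M :: "'n::finite lmap"
  assumes can: "canonical K"
    and Mu: "\<And>u. M *v (u + K *v u) = u - K *v u"
    and surj: "\<And>z. \<exists>u. z = u + K *v u"
  shows "symp w (M *v z) = symp z (M *v w)"
proof -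
  obtain u where u: "z = u + K *v u" using surj by blast
  obtain v where v: "w = v + K *v v" using surj by blast
  have c1: "symp (K *v v) (K *v u) = symp v u" and c2: "symp (K *v u) (K *v v) = symp u v"
    using can unfolding canonical_def by auto
  have a1: "symp v u = - symp u v" by (rule symp_antisym)
  have a2: "symp (K *v v) u = - symp u (K *v v)" by (rule symp_antisym)
  have a3: "symp v (K *v u) = - symp (K *v u) v" by (rule symp_antisym)
  show ?thesis unfolding u v Mu
    by (simp add: symp_lin c1 c2 a1 a2 a3 algebra_simps)
qed

lemma core_val:
  fixes K M :: "'n::finite lmap"
  assumes can: "canonical K"
    and Mu: "\<And>u. M *v (u + K *v u) = u - K *v u"
  shows "Re (symp (cvec (u + K *v u)) (\<i> *s (M *v (u + K *v u))))
       = - Re (\<i> * (symp (cvec (K *v u)) (K *v u) - symp (cvec u) u))"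
proof -
  let ?a = u and ?b = "K *v u"
  have e: "symp (cvec (?a + ?b)) (\<i> *s (M *v (?a + ?b))) =
     \<i> * (symp (cvec ?a) ?a - symp (cvec ?b) ?b) + \<i> * (symp (cvec ?b) ?a - symp (cvec ?a) ?b)"
    unfolding Mu by (simp add: symp_lin cvec_add algebra_simps)
  have "cnj (symp (cvec ?a) ?b) = symp ?a (cvec ?b)"
    by (simp add: cnj_symp cvec_def vec_eq_iff)
  also have "\<dots> = - symp (cvec ?b) ?a" by (rule symp_antisym)
  finally have cj: "cnj (symp (cvec ?a) ?b) = - symp (cvec ?b) ?a" .
  have "Im (symp (cvec ?b) ?a - symp (cvec ?a) ?b) = 0"
  proof -
    have "Im (cnj (symp (cvec ?a) ?b)) = Im (- symp (cvec ?b) ?a)" using cj by simp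
    then show ?thesis by simp
  qed
  then have "Re (\<i> * (symp (cvec ?b) ?a - symp (cvec ?a) ?b)) = 0" by simp
  then show ?thesis unfolding e by (simp add: algebra_simps)
qed

lemma Im_i_diff: "Im (\<i> * (symp (cvec a) a - symp (cvec b) b)) = 0"
  using Re_symp_cvec_self[of a] Re_symp_cvec_self[of b] by simp

theorem proposition4p3:
  fixes K :: "'n::finite lmap"
  assumes "canonical K"
  shows "(((-1) \<notin> spec K \<and>
           (\<forall>z::'n pt. z \<noteq> 0 \<longrightarrow>
              Re (symp (cvec z) (\<i> *s (matrix_inv (mat 1 + K) ** (mat 1 - K) *v z))) < 0))
     \<longleftrightarrow> ((-1) \<notin> spec K \<and>
           (\<forall>y::real ^ ('n + 'n). y \<noteq> 0 \<longrightarrow>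
              Re (symp (rvec y) (\<i> *s (matrix_inv (mat 1 + K) ** (mat 1 - K) *v rvec y))) < 0)))
   \<and> (((-1) \<notin> spec K \<and>
           (\<forall>y::real ^ ('n + 'n). y \<noteq> 0 \<longrightarrow>
              Re (symp (rvec y) (\<i> *s (matrix_inv (mat 1 + K) ** (mat 1 - K) *v rvec y))) < 0))
     \<longleftrightarrow> strictly_positive K)"
proof -
  define A where "A = mat 1 + K"
  define Ai where "Ai = matrix_inv A"
  define M where "M = Ai ** (mat 1 - K)"
  have Mdef: "matrix_inv (mat 1 + K) ** (mat 1 - K) = M" unfolding M_def Ai_def A_def ..
  define P1 where "P1 = (\<forall>z::'n pt. z \<noteq> 0 \<longrightarrow> Re (symp (cvec z) (\<i> *s (M *v z))) < 0)"
  define P2 where "P2 = (\<forall>y::real ^ ('n + 'n). y \<noteq> 0 \<longrightarrow>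
              Re (symp (rvec y) (\<i> *s (M *v rvec y))) < 0)"
  have Au: "A *v u = u + K *v u" for u
    by (simp add: A_def matrix_vector_mult_add_rdistrib)
  have spec_inj: "(-1) \<notin> spec K \<Longrightarrow> u + K *v u = 0 \<Longrightarrow> u = 0" for u
  proof -
    assume "(-1) \<notin> spec K" "u + K *v u = 0"
    then have "K *v u = (-1) *s u" by (simp add: vec_eq_iff eq_neg_iff_add_eq_0 add.commute)
    with \<open>(-1) \<notin> spec K\<close> show "u = 0" unfolding spec_def by blast
  qed
  have inv: "(-1) \<notin> spec K \<Longrightarrow> Ai ** A = mat 1 \<and> A ** Ai = mat 1"
  proof -
    assume ns: "(-1) \<notin> spec K"
    have "\<forall>x. A *v x = 0 \<longrightarrow> x = 0" using spec_inj[OF ns] Au by metis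
    then have "\<exists>B. B ** A = mat 1" using matrix_left_invertible_ker by blast
    then have "invertible A" using invertible_left_inverse by blast
    then have "\<exists>A'. A ** A' = mat 1 \<and> A' ** A = mat 1" unfolding invertible_def by blast
    then have "A ** Ai = mat 1 \<and> Ai ** A = mat 1" unfolding Ai_def matrix_inv_def
      by (rule someI_ex)
    then show ?thesis by blast
  qed
  have Mu: "(-1) \<notin> spec K \<Longrightarrow> M *v (u + K *v u) = u - K *v u" for u
  proof -
    assume ns: "(-1) \<notin> spec K"
    have "(mat 1 - K) *v (u + K *v u) = A *v (u - K *v u)"
      by (simp add: A_def matrix_vector_mult_add_rdistrib matrix_vector_mult_diff_rdistrib
          matrix_vector_right_distrib vec.diff algebra_simps)
    then have "M *v (u + K *v u) = Ai *v (A *v (u - K *v u))"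
      by (simp add: M_def matrix_vector_mul_assoc[symmetric])
    also have "\<dots> = u - K *v u" using inv[OF ns] by (simp add: matrix_vector_mul_assoc)
    finally show ?thesis .
  qed
  have surj: "(-1) \<notin> spec K \<Longrightarrow> \<exists>u. z = u + K *v u" for z
  proof -
    assume ns: "(-1) \<notin> spec K"
    have "z = A *v (Ai *v z)" using inv[OF ns] by (simp add: matrix_vector_mul_assoc)
    then show ?thesis using Au by metis
  qed
  have i2: "(-1) \<notin> spec K \<Longrightarrow> P1 \<Longrightarrow> P2"
    unfolding P1_def P2_def
  proof (intro allI impI)
    fix y :: "real ^ ('n + 'n)"
    assume "\<forall>z::'n pt. z \<noteq> 0 \<longrightarrow> Re (symp (cvec z) (\<i> *s (M *v z))) < 0" "y \<noteq> 0"
    moreover have "rvec y \<noteq> 0" using \<open>y \<noteq> 0\<close> by (auto simp: rvec_def vec_eq_iff)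
    ultimately show "Re (symp (rvec y) (\<i> *s (M *v rvec y))) < 0"
      using cvec_rvec by metis
  qed
  have i1: "(-1) \<notin> spec K \<Longrightarrow> P2 \<Longrightarrow> P1"
    unfolding P1_def
  proof (intro allI impI)
    fix z :: "'n pt"
    assume ns: "(-1) \<notin> spec K" and p2: P2 and z: "z \<noteq> 0"
    define B where "B = (\<lambda>w v. symp w (\<i> *s (M *v v)))"
    have Bsym: "B w v = B v w" for w v
      unfolding B_def symp_scale_right
      using core_sym[OF assms Mu[OF ns] surj[OF ns]] by simp
    have Ble: "Re (B (rvec x) (rvec x)) \<le> 0" for x
    proof (cases "x = 0")
      case True
      then have "rvec x = 0" by (simp add: rvec_def vec_eq_iff)
      then show ?thesis by (simp add: B_def)
    next
      case False
      then show ?thesis using p2 unfolding P2_def B_def by force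
    qed
    define x where "x = (\<chi> k. Re (z $ k))"
    define y where "y = (\<chi> k. Im (z $ k))"
    have zd: "z = rvec x + \<i> *s rvec y"
      by (simp add: x_def y_def rvec_def vec_eq_iff complex_eq_iff)
    have cz: "cvec z = rvec x - \<i> *s rvec y"
      by (simp add: zd cvec_add cvec_scale cvec_rvec)
    have "symp (cvec z) (\<i> *s (M *v z)) = B (rvec x - \<i> *s rvec y) (rvec x + \<i> *s rvec y)"
      by (simp only: B_def cz[symmetric] zd[symmetric])
    also have "\<dots> = B (rvec x) (rvec x) + B (rvec y) (rvec y) + \<i> * (B (rvec x) (rvec y) - B (rvec y) (rvec x))"
      by (simp add: B_def symp_lin matrix_vector_right_distrib vector_scalar_commute algebra_simps)
    also have "\<dots> = B (rvec x) (rvec x) + B (rvec y) (rvec y)" using Bsym[of "rvec x" "rvec y"] by simp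
    finally have eq: "Re (symp (cvec z) (\<i> *s (M *v z))) = Re (B (rvec x) (rvec x)) + Re (B (rvec y) (rvec y))"
      by simp
    have "x \<noteq> 0 \<or> y \<noteq> 0"
    proof (rule ccontr)
      assume "\<not> (x \<noteq> 0 \<or> y \<noteq> 0)"
      then have "rvec x = 0" "rvec y = 0" by (auto simp: rvec_def vec_eq_iff)
      then show False using z zd by simp
    qed
    then have "Re (B (rvec x) (rvec x)) < 0 \<or> Re (B (rvec y) (rvec y)) < 0"
      using p2 unfolding P2_def B_def by blast
    then show "Re (symp (cvec z) (\<i> *s (M *v z))) < 0" using eq Ble[of x] Ble[of y] by linarith
  qed
  have i3: "(-1) \<notin> spec K \<and> P1 \<longleftrightarrow> strictly_positive K"
  proof
    assume h: "(-1) \<notin> spec K \<and> P1"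
    then have ns: "(-1) \<notin> spec K" by blast
    show "strictly_positive K" unfolding strictly_positive_def
    proof (intro conjI allI impI)
      show "canonical K" by fact
      fix u :: "'n pt" assume "u \<noteq> 0"
      then have "u + K *v u \<noteq> 0" using spec_inj[OF ns] by blast
      then have "Re (symp (cvec (u + K *v u)) (\<i> *s (M *v (u + K *v u)))) < 0"
        using h unfolding P1_def by blast
      then have "Re (\<i> * (symp (cvec (K *v u)) (K *v u) - symp (cvec u) u)) > 0"
        using core_val[OF assms Mu[OF ns]] by simp
      then show "\<i> * (symp (cvec (K *v u)) (K *v u) - symp (cvec u) u) > 0"
        using Im_i_diff by (simp add: less_complex_def)
    qed
  next
    assume sp: "strictly_positive K"
    have ns: "(-1) \<notin> spec K"
    proof
      assume "(-1) \<in> spec K"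
      then obtain v where v: "v \<noteq> 0" "K *v v = (-1) *s v" unfolding spec_def by blast
      have "symp (cvec (K *v v)) (K *v v) = symp (cvec v) v"
        by (simp add: v symp_def xpart_def xipart_def cvec_def)
      then show False using sp v unfolding strictly_positive_def by force
    qed
    show "(-1) \<notin> spec K \<and> P1" unfolding P1_def
    proof (intro conjI allI impI ns)
      fix z :: "'n pt" assume z: "z \<noteq> 0"
      obtain u where u: "z = u + K *v u" using surj[OF ns] by blast
      have "u \<noteq> 0" using z u by auto
      then have "\<i> * (symp (cvec (K *v u)) (K *v u) - symp (cvec u) u) > 0"
        using sp unfolding strictly_positive_def by blast
      then have "Re (\<i> * (symp (cvec (K *v u)) (K *v u) - symp (cvec u) u)) > 0"
        by (simp add: less_complex_def)
      then show "Re (symp (cvec z) (\<i> *s (M *v z))) < 0"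
        unfolding u using core_val[OF assms Mu[OF ns]] by simp
    qed
  qed
  have "((-1) \<notin> spec K \<and> P1 \<longleftrightarrow> (-1) \<notin> spec K \<and> P2) \<and> ((-1) \<notin> spec K \<and> P2 \<longleftrightarrow> strictly_positive K)"
    using i1 i2 i3 by blast
  then show ?thesis unfolding Mdef P1_def P2_def .
qed

end
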